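(* Let $X$ be a finite set with $|X|=n>1$ and let $G$ be the undirected graph whose vertices are the weak orders on $X$, with $W,W'$ adjacent iff one covers the other in the poset $(\mathbf{WO},\subseteq)$. Then for all weak orders $W,W'$, the shortest-path distance in $G$ between $W$ and $W'$ equals $|J_W\,\Delta\,J_{W'}|$. Consequently $W\mapsto \chi(J_W)\in\{0,1\}^{\mathbf{WO}(2)}$ is an isometric embedding of $G$ into the hypercube graph of dimension $2^n-2$, i.e. $G$ is a partial cube. Equivalently, the family $\mathcal{J}$ is well graded: for any $A,B\in\mathcal{J}$ there is a sequence $A=A_0,A_1,\ldots,A_k=B$ in $\mathcal{J}$ with $k=|A\Delta B|$ and $|A_i\Delta A_{i+1}|=1$ for all $i$.
   Context: A weak order on $X$ is a transitive, strongly complete binary relation on $X$. $\mathbf{WO}(2)$ is the set of weak orders with exactly two indifference classes ($|\mathbf{WO}(2)|=2^n-2$), $J_W=\{U\in\mathbf{WO}(2): W\subseteq U\}$, $\mathcal{J}=\{J_W\}$, and $\chi(J)$ denotes the characteristic vector of $J\subseteq\mathbf{WO}(2)$. $W'$ covers $W$ means $W\subsetneq W'$ with no weak order strictly between them. *)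

theory Defs
  imports Main "HOL-Library.Extended_Nat"
begin

definition weak_order :: "'a set \<Rightarrow> 'a rel \<Rightarrow> bool" where
  "weak_order X W \<longleftrightarrow> W \<subseteq> X \<times> X \<and> trans W \<and>
     (\<forall>x\<in>X. \<forall>y\<in>X. (x, y) \<in> W \<or> (y, x) \<in> W)"

definition WO :: "'a set \<Rightarrow> 'a rel set" where
  "WO X = {W. weak_order X W}"

definition indiff_classes :: "'a set \<Rightarrow> 'a rel \<Rightarrow> 'a set set" where
  "indiff_classes X W = X // (W \<inter> W\<inverse>)"

definition WO2 :: "'a set \<Rightarrow> 'a rel set" where
  "WO2 X = {W \<in> WO X. card (indiff_classes X W) = 2}"

definition J :: "'a set \<Rightarrow> 'a rel \<Rightarrow> 'a rel set" where
  "J X W = {U \<in> WO2 X. W \<subseteq> U}"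

definition symdiff :: "'b set \<Rightarrow> 'b set \<Rightarrow> 'b set" where
  "symdiff A B = (A - B) \<union> (B - A)"

definition covers :: "'a set \<Rightarrow> 'a rel \<Rightarrow> 'a rel \<Rightarrow> bool" where
  "covers X W W' \<longleftrightarrow> W \<in> WO X \<and> W' \<in> WO X \<and> W \<subset> W' \<and>
     \<not> (\<exists>V \<in> WO X. W \<subset> V \<and> V \<subset> W')"

definition adj :: "'a set \<Rightarrow> 'a rel \<Rightarrow> 'a rel \<Rightarrow> bool" where
  "adj X W W' \<longleftrightarrow> covers X W W' \<or> covers X W' W"

definition walk :: "'a set \<Rightarrow> nat \<Rightarrow> 'a rel \<Rightarrow> 'a rel \<Rightarrow> bool" where
  "walk X k W W' \<longleftrightarrow> (\<exists>ws. length ws = Suc k \<and> hd ws = W \<and> last ws = W' \<and>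
     set ws \<subseteq> WO X \<and> (\<forall>i < k. adj X (ws ! i) (ws ! Suc i)))"

text \<open>Shortest-path distance in G (infinity if no path).\<close>
definition gdist :: "'a set \<Rightarrow> 'a rel \<Rightarrow> 'a rel \<Rightarrow> enat" where
  "gdist X W W' = (INF k \<in> {k. walk X k W W'}. enat k)"

definition well_graded :: "'b set set \<Rightarrow> bool" where
  "well_graded F \<longleftrightarrow> (\<forall>A\<in>F. \<forall>B\<in>F. \<exists>as. length as = Suc (card (symdiff A B)) \<and>
     hd as = A \<and> last as = B \<and> set as \<subseteq> F \<and>
     (\<forall>i < card (symdiff A B). card (symdiff (as ! i) (as ! Suc i)) = 1))"

end

theory Submission
  imports Defs
begin

definition upset :: "'a rel \<Rightarrow> 'a set \<Rightarrow> bool" where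
  "upset W A \<longleftrightarrow> (\<forall>x y. (x,y) \<in> W \<longrightarrow> y \<in> A \<longrightarrow> x \<in> A)"

definition Up :: "'a set \<Rightarrow> 'a rel \<Rightarrow> 'a set set" where
  "Up X W = {A. A \<subseteq> X \<and> A \<noteq> {} \<and> A \<noteq> X \<and> upset W A}"

definition RC :: "'a set \<Rightarrow> 'a set set \<Rightarrow> 'a rel" where
  "RC X C = {(x,y). x \<in> X \<and> y \<in> X \<and> (\<forall>A\<in>C. y \<in> A \<longrightarrow> x \<in> A)}"

definition cut :: "'a set \<Rightarrow> 'a set \<Rightarrow> 'a rel" where
  "cut X A = {(x,y). x \<in> X \<and> y \<in> X \<and> (y \<in> A \<longrightarrow> x \<in> A)}"

definition valid :: "'a set \<Rightarrow> 'a set set \<Rightarrow> bool" where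
  "valid X C \<longleftrightarrow> (\<forall>A\<in>C. A \<subseteq> X \<and> A \<noteq> {} \<and> A \<noteq> X) \<and> (\<forall>A\<in>C. \<forall>B\<in>C. A \<subseteq> B \<or> B \<subseteq> A)"

lemma WO_iff: "W \<in> WO X \<longleftrightarrow> W \<subseteq> X \<times> X \<and> trans W \<and> (\<forall>x\<in>X. \<forall>y\<in>X. (x, y) \<in> W \<or> (y, x) \<in> W)"
  by (simp add: WO_def weak_order_def)

lemma Up_valid: "W \<in> WO X \<Longrightarrow> valid X (Up X W)"
  unfolding valid_def Up_def upset_def WO_iff by blast

lemma RC_Up: assumes "W \<in> WO X" shows "RC X (Up X W) = W"
proof
  show "W \<subseteq> RC X (Up X W)"
    using assms unfolding RC_def Up_def upset_def WO_iff by blast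
next
  show "RC X (Up X W) \<subseteq> W"
  proof
    fix p assume p: "p \<in> RC X (Up X W)"
    obtain x y where pxy: "p = (x,y)" by (cases p)
    have xy: "x \<in> X" "y \<in> X" using p pxy unfolding RC_def by auto
    show "p \<in> W"
    proof (rule ccontr)
      assume "p \<notin> W"
      hence nxy: "(x,y) \<notin> W" using pxy by simp
      define A where "A = {z \<in> X. (z,y) \<in> W}"
      have "(y,y) \<in> W" using assms xy unfolding WO_iff by blast
      hence "y \<in> A" using xy A_def by auto
      moreover have "x \<notin> A" using nxy A_def by auto
      moreover have "upset W A" using assms unfolding upset_def A_def WO_iff trans_def by blast
      ultimately have "A \<in> Up X W" unfolding Up_def A_def using xy by auto
      thus False using p pxy \<open>y \<in> A\<close> \<open>x \<notin> A\<close> unfolding RC_def by auto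
    qed
  qed
qed

lemma RC_WO: assumes "valid X C" shows "RC X C \<in> WO X"
  unfolding WO_iff
proof (intro conjI)
  show "RC X C \<subseteq> X \<times> X" unfolding RC_def by auto
  show "trans (RC X C)" unfolding RC_def trans_def by auto
  show "\<forall>x\<in>X. \<forall>y\<in>X. (x, y) \<in> RC X C \<or> (y, x) \<in> RC X C"
    using assms unfolding RC_def valid_def by blast
qed

lemma RC_anti: "C \<subseteq> D \<Longrightarrow> RC X D \<subseteq> RC X C"
  unfolding RC_def by auto

lemma Up_anti: "W \<subseteq> V \<Longrightarrow> Up X V \<subseteq> Up X W"
  unfolding Up_def upset_def by auto

lemma finite_Up: "finite X \<Longrightarrow> finite (Up X W)"
  by (rule finite_subset[of _ "Pow X"]) (auto simp: Up_def)

lemma valid_finite: "finite X \<Longrightarrow> valid X C \<Longrightarrow> finite C"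
  by (rule finite_subset[of _ "Pow X"]) (auto simp: valid_def)

lemma chain_Union: assumes "valid X C" "F \<subseteq> C" "finite F" "F \<noteq> {}" shows "\<Union>F \<in> F"
  using Union_in_chain[OF assms(3,4), of UNIV] assms(1,2) unfolding subset.chain_def valid_def
  by blast

lemma chain_Inter: assumes "valid X C" "F \<subseteq> C" "finite F" "F \<noteq> {}" shows "\<Inter>F \<in> F"
  using Inter_in_chain[OF assms(3,4), of UNIV] assms(1,2) unfolding subset.chain_def valid_def
  by blast

lemma valid_subset: assumes "valid X D" "C \<subseteq> D" shows "valid X C"
  using assms unfolding valid_def by (meson subsetD)

lemma Up_RC: assumes fin: "finite X" and v: "valid X C" shows "Up X (RC X C) = C"
proof
  show "C \<subseteq> Up X (RC X C)"
  proof
    fix A assume A: "A \<in> C"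
    have "A \<subseteq> X \<and> A \<noteq> {} \<and> A \<noteq> X" using v A unfolding valid_def by simp
    moreover have "upset (RC X C) A" using A unfolding upset_def RC_def by auto
    ultimately show "A \<in> Up X (RC X C)" unfolding Up_def by simp
  qed
next
  show "Up X (RC X C) \<subseteq> C"
  proof
    fix S assume S: "S \<in> Up X (RC X C)"
    hence SX: "S \<subseteq> X" "S \<noteq> {}" "S \<noteq> X" and up: "upset (RC X C) S" unfolding Up_def by auto
    have finC: "finite C" using valid_finite[OF fin v] .
    define G where "G = {A \<in> C. S \<subseteq> A}"
    have sep: "\<exists>A\<in>G. z \<notin> A" if z: "z \<in> X" "z \<notin> S" for z
    proof -
      define H where "H = {A \<in> C. z \<notin> A \<and> A \<inter> S \<noteq> {}}"
      have ex: "\<exists>A\<in>C. y \<in> A \<and> z \<notin> A" if y: "y \<in> S" for y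
      proof -
        have "(z,y) \<notin> RC X C" using up z(2) y unfolding upset_def by auto
        moreover have "y \<in> X" using y SX(1) by auto
        ultimately show ?thesis using z(1) unfolding RC_def by auto
      qed
      obtain y0 where y0: "y0 \<in> S" using SX(2) by auto
      then obtain A0 where "A0 \<in> C" "y0 \<in> A0" "z \<notin> A0" using ex by auto
      hence "A0 \<in> H" using y0 unfolding H_def by auto
      hence "H \<noteq> {}" by auto
      moreover have "finite H" using finC unfolding H_def by auto
      moreover have "H \<subseteq> C" unfolding H_def by auto
      ultimately have U: "\<Union>H \<in> H" using chain_Union[OF v] by simp
      have "S \<subseteq> \<Union>H"
      proof
        fix y assume y: "y \<in> S"
        then obtain A where "A \<in> C" "y \<in> A" "z \<notin> A" using ex by auto
        hence "A \<in> H" using y unfolding H_def by auto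
        thus "y \<in> \<Union>H" using \<open>y \<in> A\<close> by auto
      qed
      hence "\<Union>H \<in> G" using U unfolding G_def H_def by auto
      moreover have "z \<notin> \<Union>H" unfolding H_def by auto
      ultimately show ?thesis by metis
    qed
    obtain z0 where "z0 \<in> X" "z0 \<notin> S" using SX by auto
    hence "G \<noteq> {}" using sep by auto
    moreover have "finite G" using finC unfolding G_def by auto
    moreover have "G \<subseteq> C" unfolding G_def by auto
    ultimately have I: "\<Inter>G \<in> G" using chain_Inter[OF v] by simp
    have "\<Inter>G = S"
    proof
      show "S \<subseteq> \<Inter>G" unfolding G_def by auto
      have "\<Inter>G \<in> C" using I unfolding G_def by auto
      hence "\<Inter>G \<subseteq> X" using v unfolding valid_def by auto
      show "\<Inter>G \<subseteq> S"
      proof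
        fix z assume z: "z \<in> \<Inter>G"
        show "z \<in> S"
        proof (rule ccontr)
          assume "z \<notin> S"
          then obtain A where "A \<in> G" "z \<notin> A" using sep z \<open>\<Inter>G \<subseteq> X\<close> by blast
          thus False using z by auto
        qed
      qed
    qed
    thus "S \<in> C" using I unfolding G_def by auto
  qed
qed

lemma WO_sub_iff: assumes "W \<in> WO X" "V \<in> WO X" shows "W \<subseteq> V \<longleftrightarrow> Up X V \<subseteq> Up X W"
proof
  assume "W \<subseteq> V" thus "Up X V \<subseteq> Up X W" by (rule Up_anti)
next
  assume "Up X V \<subseteq> Up X W"
  hence "RC X (Up X W) \<subseteq> RC X (Up X V)" by (rule RC_anti)
  thus "W \<subseteq> V" unfolding RC_Up[OF assms(1)] RC_Up[OF assms(2)] .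
qed

lemma Up_inj: assumes "W \<in> WO X" "V \<in> WO X" "Up X W = Up X V" shows "W = V"
proof -
  have "W = RC X (Up X W)" using RC_Up[OF assms(1)] by (rule sym)
  also have "\<dots> = RC X (Up X V)" using assms(3) by (rule arg_cong)
  also have "\<dots> = V" using RC_Up[OF assms(2)] .
  finally show ?thesis .
qed

lemma cover_step: assumes fin: "finite X" and v: "valid X D" and B: "B \<in> D"
  shows "covers X (RC X D) (RC X (D - {B}))"
proof -
  have v': "valid X (D - {B})" using valid_subset[OF v] by blast
  have W1: "RC X D \<in> WO X" using RC_WO[OF v] .
  have W2: "RC X (D - {B}) \<in> WO X" using RC_WO[OF v'] .
  have U1: "Up X (RC X D) = D" using Up_RC[OF fin v] .
  have U2: "Up X (RC X (D - {B})) = D - {B}" using Up_RC[OF fin v'] .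
  have s1: "RC X D \<subseteq> RC X (D - {B})" by (rule RC_anti) blast
  have s2: "RC X D \<noteq> RC X (D - {B})"
  proof
    assume "RC X D = RC X (D - {B})"
    hence "D = D - {B}" using U1 U2 by metis
    thus False using B by blast
  qed
  have sub: "RC X D \<subset> RC X (D - {B})" using s1 s2 by (rule psubsetI)
  have "\<not> (\<exists>V \<in> WO X. RC X D \<subset> V \<and> V \<subset> RC X (D - {B}))"
  proof
    assume "\<exists>V \<in> WO X. RC X D \<subset> V \<and> V \<subset> RC X (D - {B})"
    then obtain V where V: "V \<in> WO X" "RC X D \<subset> V" "V \<subset> RC X (D - {B})" by blast
    have a: "Up X V \<subseteq> D" using WO_sub_iff[OF W1 V(1)] V(2) U1 by auto
    have b: "D - {B} \<subseteq> Up X V" using WO_sub_iff[OF V(1) W2] V(3) U2 by auto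
    have c: "Up X V \<noteq> D"
    proof
      assume "Up X V = D" hence "V = RC X D" using Up_inj[OF V(1) W1] U1 by simp
      thus False using V(2) by simp
    qed
    have d: "Up X V \<noteq> D - {B}"
    proof
      assume "Up X V = D - {B}" hence "V = RC X (D - {B})" using Up_inj[OF V(1) W2] U2 by simp
      thus False using V(3) by simp
    qed
    have "Up X V = D \<or> Up X V = D - {B}"
    proof (cases "B \<in> Up X V")
      case True thus ?thesis using a b by blast
    next
      case False thus ?thesis using a b by blast
    qed
    thus False using c d by blast
  qed
  thus ?thesis unfolding covers_def using W1 W2 sub by blast
qed

lemma covers_card: assumes fin: "finite X" and c: "covers X W W'"
  shows "card (symdiff (Up X W) (Up X W')) = 1"
proof -
  have W: "W \<in> WO X" "W' \<in> WO X" "W \<subset> W'" and nb: "\<not> (\<exists>V \<in> WO X. W \<subset> V \<and> V \<subset> W')"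
    using c unfolding covers_def by auto
  have s: "Up X W' \<subseteq> Up X W" using WO_sub_iff[OF W(1,2)] W(3) by auto
  have ne: "Up X W' \<noteq> Up X W"
  proof
    assume "Up X W' = Up X W" hence "W' = W" using Up_inj[OF W(2,1)] by simp
    thus False using W(3) by simp
  qed
  have fU: "finite (Up X W)" using finite_Up[OF fin] .
  have le: "card (Up X W - Up X W') \<le> 1"
  proof (rule ccontr)
    assume "\<not> ?thesis"
    hence "\<not> card (Up X W - Up X W') \<le> Suc 0" by simp
    then obtain A1 A2 where A: "A1 \<in> Up X W - Up X W'" "A2 \<in> Up X W - Up X W'" "A1 \<noteq> A2"
      unfolding card_le_Suc0_iff_eq[OF finite_Diff[OF fU]] by blast
    define C where "C = insert A1 (Up X W')"
    have CW: "C \<subseteq> Up X W" using s A unfolding C_def by blast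
    have vC: "valid X C" using valid_subset[OF Up_valid[OF W(1)] CW] .
    define V where "V = RC X C"
    have V: "V \<in> WO X" using RC_WO[OF vC] unfolding V_def .
    have UV: "Up X V = C" using Up_RC[OF fin vC] unfolding V_def .
    have "W \<subseteq> V" using WO_sub_iff[OF W(1) V] UV CW by simp
    moreover have "W \<noteq> V"
    proof
      assume "W = V" hence "Up X W = C" using UV by simp
      thus False using A unfolding C_def by blast
    qed
    moreover have "V \<subseteq> W'" using WO_sub_iff[OF V W(2)] UV unfolding C_def by auto
    moreover have "V \<noteq> W'"
    proof
      assume "V = W'" hence "Up X W' = C" using UV by simp
      thus False using A unfolding C_def by blast
    qed
    ultimately show False using nb V by blast
  qed
  have "Up X W - Up X W' \<noteq> {}" using s ne by blast
  hence "card (Up X W - Up X W') \<noteq> 0" using fU by simp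
  hence "card (Up X W - Up X W') = 1" using le by linarith
  moreover have "symdiff (Up X W) (Up X W') = Up X W - Up X W'" using s unfolding symdiff_def by blast
  ultimately show ?thesis by simp
qed

lemma symdiff_comm: "symdiff A B = symdiff B A"
  unfolding symdiff_def by (rule Un_commute)

lemma adj_card: assumes "finite X" "adj X W W'" shows "card (symdiff (Up X W) (Up X W')) = 1"
proof (cases "covers X W W'")
  case True thus ?thesis using covers_card[OF assms(1)] by simp
next
  case False
  hence "covers X W' W" using assms(2) unfolding adj_def by simp
  thus ?thesis using covers_card[OF assms(1)] symdiff_comm by metis
qed

lemma cut_WO2: assumes A: "A \<subseteq> X" "A \<noteq> {}" "A \<noteq> X" shows "cut X A \<in> WO2 X"
proof -
  have wo: "cut X A \<in> WO X" unfolding WO_iff cut_def trans_def by auto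
  have cls: "(cut X A \<inter> (cut X A)\<inverse>) `` {x} = (if x \<in> A then A else X - A)" if "x \<in> X" for x
    using that A(1) unfolding cut_def by auto
  have q: "indiff_classes X (cut X A) = {A, X - A}"
  proof -
    have "indiff_classes X (cut X A) = (\<Union>x\<in>X. {(cut X A \<inter> (cut X A)\<inverse>) `` {x}})"
      unfolding indiff_classes_def quotient_def by simp
    also have "\<dots> = (\<Union>x\<in>X. {if x \<in> A then A else X - A})" using cls by simp
    also have "\<dots> = {A, X - A}"
    proof
      show "(\<Union>x\<in>X. {if x \<in> A then A else X - A}) \<subseteq> {A, X - A}"
      proof (rule UN_least)
        fix x show "{if x \<in> A then A else X - A} \<subseteq> {A, X - A}" by (cases "x \<in> A") simp_all
      qed
      obtain a where a: "a \<in> A" using A(2) by blast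
      obtain c where c: "c \<in> X" "c \<notin> A" using A(1,3) by blast
      have "A \<in> (\<Union>x\<in>X. {if x \<in> A then A else X - A})"
        using a A(1) by (intro UN_I[of a]) auto
      moreover have "X - A \<in> (\<Union>x\<in>X. {if x \<in> A then A else X - A})"
        using c by (intro UN_I[of c]) auto
      ultimately show "{A, X - A} \<subseteq> (\<Union>x\<in>X. {if x \<in> A then A else X - A})" by blast
    qed
    finally show ?thesis .
  qed
  have "A \<noteq> X - A" using A by auto
  hence "card {A, X - A} = 2" by simp
  thus ?thesis using wo q unfolding WO2_def by simp
qed

lemma WO2_cut: assumes U: "U \<in> WO2 X" shows "\<exists>A. A \<subseteq> X \<and> A \<noteq> {} \<and> A \<noteq> X \<and> U = cut X A"
proof -
  define r where "r = U \<inter> U\<inverse>"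
  have wo: "U \<subseteq> X \<times> X" "trans U" "\<forall>x\<in>X. \<forall>y\<in>X. (x, y) \<in> U \<or> (y, x) \<in> U"
    using U unfolding WO2_def WO_iff by auto
  have tr: "(x,z) \<in> U" if "(x,y) \<in> U" "(y,z) \<in> U" for x y z
    using wo(2) that by (rule transD)
  have rI: "(x,y) \<in> r \<longleftrightarrow> (x,y) \<in> U \<and> (y,x) \<in> U" for x y unfolding r_def by auto
  have "card (X // r) = 2" using U unfolding WO2_def indiff_classes_def r_def by simp
  then obtain C1 C2 where C': "X // r = {C1, C2}" "C1 \<noteq> C2" unfolding card_2_iff by blast
  hence C: "C1 \<noteq> C2" "X // r = {C1, C2}" by simp_all
  have "C1 \<in> X // r" using C(2) by simp
  then obtain a where a': "C1 = r `` {a}" "a \<in> X" by (rule quotientE)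
  hence a: "a \<in> X" "C1 = r `` {a}" by simp_all
  have "C2 \<in> X // r" using C(2) by simp
  then obtain b where b': "C2 = r `` {b}" "b \<in> X" by (rule quotientE)
  hence b: "b \<in> X" "C2 = r `` {b}" by simp_all
  have refl: "(x,x) \<in> U" if "x \<in> X" for x using wo(3) that by blast
  have ab: "(a,b) \<notin> r"
  proof
    assume ab: "(a,b) \<in> r"
    have "r `` {a} = r `` {b}"
    proof (rule set_eqI)
      fix z show "z \<in> r `` {a} \<longleftrightarrow> z \<in> r `` {b}"
        using ab tr unfolding Image_singleton_iff rI by blast
    qed
    hence "C1 = C2" using a(2) b(2) by simp
    thus False using C(1) by contradiction
  qed
  have all: "(a,x) \<in> r \<or> (b,x) \<in> r" if x: "x \<in> X" for x
  proof -
    have "r `` {x} \<in> X // r" using x by (rule quotientI)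
    moreover have "x \<in> r `` {x}" using refl x unfolding r_def by auto
    ultimately have "x \<in> C1 \<or> x \<in> C2" using C(2) by blast
    thus ?thesis using a(2) b(2) by blast
  qed
  have key: "\<exists>a b. a \<in> X \<and> b \<in> X \<and> (a,b) \<in> U \<and> (b,a) \<notin> U \<and> (\<forall>x\<in>X. (a,x) \<in> r \<or> (b,x) \<in> r)"
  proof (cases "(a,b) \<in> U")
    case True
    hence "(b,a) \<notin> U" using ab rI by blast
    thus ?thesis using a b True all by blast
  next
    case False
    hence "(b,a) \<in> U" using wo a b by blast
    moreover have "\<forall>x\<in>X. (b,x) \<in> r \<or> (a,x) \<in> r" using all by blast
    ultimately show ?thesis using a b False by blast
  qed
  then obtain a b where k: "a \<in> X" "b \<in> X" "(a,b) \<in> U" "(b,a) \<notin> U" and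
    kall: "\<And>x. x \<in> X \<Longrightarrow> (a,x) \<in> r \<or> (b,x) \<in> r"
    by blast
  define A where "A = {x \<in> X. (x,a) \<in> U}"
  have inA: "(a,x) \<in> U \<and> (x,a) \<in> U" if "x \<in> X" "x \<in> A" for x
  proof -
    have "(x,a) \<in> U" using that A_def by simp
    moreover have "(a,x) \<in> U"
    proof (rule ccontr)
      assume "(a,x) \<notin> U"
      hence "(b,x) \<in> U" using kall[OF that(1)] rI by blast
      hence "(b,a) \<in> U" using tr \<open>(x,a) \<in> U\<close> by blast
      thus False using k by simp
    qed
    ultimately show ?thesis by simp
  qed
  have notA: "(b,x) \<in> U \<and> (x,b) \<in> U" if "x \<in> X" "x \<notin> A" for x
  proof -
    have "(a,x) \<notin> r" using that A_def rI by auto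
    thus ?thesis using kall[OF that(1)] rI by blast
  qed
  have "U = cut X A"
  proof (rule set_eqI)
    fix p show "p \<in> U \<longleftrightarrow> p \<in> cut X A"
    proof (cases p)
      case (Pair x y)
      show ?thesis
      proof (cases "x \<in> X \<and> y \<in> X")
        case True
        hence x: "x \<in> X" and y: "y \<in> X" by auto
        have "(x,y) \<in> U \<longleftrightarrow> (y \<in> A \<longrightarrow> x \<in> A)"
        proof (cases "x \<in> A")
          case xA: True
          have xa: "(x,a) \<in> U" using inA[OF x xA] by simp
          show ?thesis
          proof (cases "y \<in> A")
            case True
            thus ?thesis using tr[OF xa] inA[OF y True] xA by blast
          next
            case False
            have "(x,b) \<in> U" using tr[OF xa k(3)] .
            thus ?thesis using tr notA[OF y False] xA by blast
          qed
        next
          case xA: False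
          have bx: "(x,b) \<in> U" using notA[OF x xA] by simp
          show ?thesis
          proof (cases "y \<in> A")
            case True
            have "(x,y) \<notin> U"
            proof
              assume "(x,y) \<in> U"
              hence "(x,a) \<in> U" using tr inA[OF y True] by blast
              thus False using xA x A_def by simp
            qed
            thus ?thesis using True xA by simp
          next
            case False
            thus ?thesis using tr[OF bx] notA[OF y False] xA by blast
          qed
        qed
        thus ?thesis using Pair x y unfolding cut_def by simp
      next
        case False thus ?thesis using Pair wo(1) unfolding cut_def by auto
      qed
    qed
  qed
  moreover have "a \<in> A" "b \<notin> A" using k refl unfolding A_def by auto
  ultimately have UA: "U = cut X A" "A \<noteq> {}" "A \<noteq> X" using k(2) by auto
  have "A \<subseteq> X" unfolding A_def by auto
  with UA show ?thesis by (intro exI[of _ A] conjI)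
qed

lemma cut_sep: assumes "a \<in> A" "a \<notin> B" "c \<in> X" "c \<notin> A" "A \<subseteq> X"
  shows "cut X A \<noteq> cut X B"
proof
  assume e: "cut X A = cut X B"
  have "(c,a) \<in> cut X B" using assms unfolding cut_def by auto
  moreover have "(c,a) \<notin> cut X A" using assms unfolding cut_def by auto
  ultimately show False using e by simp
qed

lemma cut_inj: "inj_on (cut X) {A. A \<subseteq> X \<and> A \<noteq> {} \<and> A \<noteq> X}"
proof (rule inj_onI)
  fix A B assume A: "A \<in> {A. A \<subseteq> X \<and> A \<noteq> {} \<and> A \<noteq> X}" and B: "B \<in> {A. A \<subseteq> X \<and> A \<noteq> {} \<and> A \<noteq> X}"
    and e: "cut X A = cut X B"
  have A': "A \<subseteq> X" "A \<noteq> X" and B': "B \<subseteq> X" "B \<noteq> X" using A B by auto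
  obtain c where c: "c \<in> X" "c \<notin> A" using A' by blast
  obtain d where d: "d \<in> X" "d \<notin> B" using B' by blast
  have "A \<subseteq> B"
  proof
    fix a assume "a \<in> A" thus "a \<in> B" using cut_sep[of a A B c X] c A' e by blast
  qed
  moreover have "B \<subseteq> A"
  proof
    fix a assume "a \<in> B" thus "a \<in> A" using cut_sep[of a B A d X] d B' e by metis
  qed
  ultimately show "A = B" by (rule subset_antisym)
qed

lemma J_eq: assumes W: "W \<in> WO X" shows "J X W = cut X ` Up X W"
proof
  have WX: "W \<subseteq> X \<times> X" using W unfolding WO_iff by auto
  show "J X W \<subseteq> cut X ` Up X W"
  proof
    fix U assume "U \<in> J X W"
    hence U: "U \<in> WO2 X" "W \<subseteq> U" unfolding J_def by auto
    obtain A where A: "A \<subseteq> X" "A \<noteq> {}" "A \<noteq> X" "U = cut X A" using WO2_cut[OF U(1)] by blast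
    have "upset W A" using U(2) A(4) unfolding upset_def cut_def by blast
    hence "A \<in> Up X W" using A unfolding Up_def by auto
    thus "U \<in> cut X ` Up X W" using A by auto
  qed
  show "cut X ` Up X W \<subseteq> J X W"
  proof
    fix U assume "U \<in> cut X ` Up X W"
    then obtain A where A: "A \<in> Up X W" "U = cut X A" by blast
    have "U \<in> WO2 X" using cut_WO2 A unfolding Up_def by auto
    moreover have "W \<subseteq> U" using A WX unfolding Up_def upset_def cut_def by blast
    ultimately show "U \<in> J X W" unfolding J_def by auto
  qed
qed

lemma card_J: assumes "W \<in> WO X" "W' \<in> WO X"
  shows "card (symdiff (J X W) (J X W')) = card (symdiff (Up X W) (Up X W'))"
proof -
  let ?P = "{A. A \<subseteq> X \<and> A \<noteq> {} \<and> A \<noteq> X}"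
  have s: "Up X W \<subseteq> ?P" "Up X W' \<subseteq> ?P" unfolding Up_def by auto
  have inj: "inj_on (cut X) ?P" by (rule cut_inj)
  have e1: "cut X ` (Up X W - Up X W') = cut X ` Up X W - cut X ` Up X W'"
    by (rule inj_on_image_set_diff[OF inj]) (use s in auto)
  have e2: "cut X ` (Up X W' - Up X W) = cut X ` Up X W' - cut X ` Up X W"
    by (rule inj_on_image_set_diff[OF inj]) (use s in auto)
  have "symdiff (J X W) (J X W') = cut X ` symdiff (Up X W) (Up X W')"
    unfolding J_eq[OF assms(1)] J_eq[OF assms(2)] symdiff_def image_Un e1 e2 ..
  moreover have "inj_on (cut X) (symdiff (Up X W) (Up X W'))"
    by (rule inj_on_subset[OF inj]) (use s in \<open>auto simp: symdiff_def\<close>)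
  ultimately show ?thesis by (simp add: card_image)
qed

lemma walk0: "W \<in> WO X \<Longrightarrow> walk X 0 W W"
  unfolding walk_def by (rule exI[of _ "[W]"]) auto

lemma walk_snoc: assumes w: "walk X k A B" and ad: "adj X B C" and C: "C \<in> WO X"
  shows "walk X (Suc k) A C"
proof -
  obtain ws where ws: "length ws = Suc k" "hd ws = A" "last ws = B" "set ws \<subseteq> WO X"
    "\<forall>i < k. adj X (ws ! i) (ws ! Suc i)" using w unfolding walk_def by blast
  have ne: "ws \<noteq> []" using ws(1) by auto
  have lastk: "ws ! k = B" using ws(1,3) ne by (simp add: last_conv_nth)
  show ?thesis unfolding walk_def
  proof (rule exI[of _ "ws @ [C]"], intro conjI)
    show "length (ws @ [C]) = Suc (Suc k)" using ws by simp
    show "hd (ws @ [C]) = A" using ws ne by simp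
    show "last (ws @ [C]) = C" by simp
    show "set (ws @ [C]) \<subseteq> WO X" using ws C by simp
    show "\<forall>i<Suc k. adj X ((ws @ [C]) ! i) ((ws @ [C]) ! Suc i)"
    proof (intro allI impI)
      fix i assume i: "i < Suc k"
      show "adj X ((ws @ [C]) ! i) ((ws @ [C]) ! Suc i)"
      proof (cases "i < k")
        case True thus ?thesis using ws by (simp add: nth_append)
      next
        case False
        hence "i = k" using i by simp
        thus ?thesis using ws(1) lastk ad by (simp add: nth_append)
      qed
    qed
  qed
qed

lemma symdiff_tri: assumes "finite A" "finite B" "finite C"
  shows "card (symdiff A C) \<le> card (symdiff A B) + card (symdiff B C)"
proof -
  have "symdiff A C \<subseteq> symdiff A B \<union> symdiff B C" unfolding symdiff_def by blast
  hence "card (symdiff A C) \<le> card (symdiff A B \<union> symdiff B C)"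
    by (rule card_mono[rotated]) (use assms in \<open>auto simp: symdiff_def\<close>)
  also have "\<dots> \<le> card (symdiff A B) + card (symdiff B C)" by (rule card_Un_le)
  finally show ?thesis .
qed

lemma walk_bound: assumes fin: "finite X" and w: "walk X k W W'"
  shows "card (symdiff (Up X W) (Up X W')) \<le> k"
proof -
  obtain ws where ws: "length ws = Suc k" "hd ws = W" "last ws = W'"
    "\<forall>i < k. adj X (ws ! i) (ws ! Suc i)" using w unfolding walk_def by blast
  have ne: "ws \<noteq> []" using ws(1) by auto
  have "i \<le> k \<Longrightarrow> card (symdiff (Up X (ws ! 0)) (Up X (ws ! i))) \<le> i" for i
  proof (induction i)
    case 0 thus ?case by (simp add: symdiff_def)
  next
    case (Suc i)
    have "card (symdiff (Up X (ws ! 0)) (Up X (ws ! Suc i)))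
       \<le> card (symdiff (Up X (ws ! 0)) (Up X (ws ! i))) + card (symdiff (Up X (ws ! i)) (Up X (ws ! Suc i)))"
      using symdiff_tri finite_Up[OF fin] by blast
    moreover have "card (symdiff (Up X (ws ! i)) (Up X (ws ! Suc i))) = 1"
      using adj_card[OF fin] ws(4) Suc.prems by auto
    ultimately show ?case using Suc by simp
  qed
  from this[of k] show ?thesis using ws ne by (simp add: hd_conv_nth last_conv_nth)
qed

lemma card_minus_one: assumes "finite D" "B \<in> D - C" "card (D - C) = Suc n"
  shows "card ((D - {B}) - C) = n" "card (D - insert B C) = n"
proof -
  have e: "(D - {B}) - C = (D - C) - {B}" "D - insert B C = (D - C) - {B}" by auto
  have "card ((D - C) - {B}) = card (D - C) - 1" using assms(2) by (rule card_Diff_singleton)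
  thus "card ((D - {B}) - C) = n" "card (D - insert B C) = n" using e assms(3) by simp_all
qed

lemma walk_down: assumes fin: "finite X" and v: "valid X D0"
  shows "\<forall>D m. C \<subseteq> D \<longrightarrow> D \<subseteq> D0 \<longrightarrow> card (D - C) = n \<longrightarrow> walk X m A (RC X D) \<longrightarrow> walk X (m + n) A (RC X C)"
proof (induction n)
  case 0
  show ?case
  proof (intro allI impI)
    fix D m assume h: "C \<subseteq> D" "D \<subseteq> D0" "card (D - C) = 0" "walk X m A (RC X D)"
    have "finite D" using valid_finite[OF fin valid_subset[OF v h(2)]] .
    hence "D - C = {}" using h(3) by simp
    hence "D = C" using h(1) by blast
    thus "walk X (m + 0) A (RC X C)" using h(4) by simp
  qed
next
  case (Suc n)
  show ?case
  proof (intro allI impI)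
    fix D m assume h: "C \<subseteq> D" "D \<subseteq> D0" "card (D - C) = Suc n" "walk X m A (RC X D)"
    have vD: "valid X D" using valid_subset[OF v h(2)] .
    have fD: "finite D" using valid_finite[OF fin vD] .
    have "D - C \<noteq> {}"
    proof
      assume e: "D - C = {}"
      have "card (D - C) = 0" unfolding e by simp
      thus False using h(3) by simp
    qed
    then obtain B where B: "B \<in> D - C" by blast
    have BD: "B \<in> D" using B by simp
    have "covers X (RC X D) (RC X (D - {B}))" using cover_step[OF fin vD BD] .
    hence ad: "adj X (RC X D) (RC X (D - {B}))" unfolding adj_def by simp
    have vD': "valid X (D - {B})" using valid_subset[OF vD] by blast
    have w: "walk X (Suc m) A (RC X (D - {B}))" using walk_snoc[OF h(4) ad RC_WO[OF vD']] .
    have c: "card ((D - {B}) - C) = n" using card_minus_one[OF fD B h(3)] by simp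
    have s1: "C \<subseteq> D - {B}" using h(1) B by blast
    have s2: "D - {B} \<subseteq> D0" using h(2) by blast
    have "walk X (Suc m + n) A (RC X C)" using Suc.IH s1 s2 c w by blast
    thus "walk X (m + Suc n) A (RC X C)" by simp
  qed
qed

lemma walk_up: assumes fin: "finite X" and v: "valid X D"
  shows "\<forall>C m. C \<subseteq> D \<longrightarrow> card (D - C) = n \<longrightarrow> walk X m A (RC X C) \<longrightarrow> walk X (m + n) A (RC X D)"
proof (induction n)
  case 0
  show ?case
  proof (intro allI impI)
    fix C m assume h: "C \<subseteq> D" "card (D - C) = 0" "walk X m A (RC X C)"
    have "finite D" using valid_finite[OF fin v] .
    hence "D - C = {}" using h(2) by simp
    hence "D = C" using h(1) by blast
    thus "walk X (m + 0) A (RC X D)" using h(3) by simp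
  qed
next
  case (Suc n)
  show ?case
  proof (intro allI impI)
    fix C m assume h: "C \<subseteq> D" "card (D - C) = Suc n" "walk X m A (RC X C)"
    have fD: "finite D" using valid_finite[OF fin v] .
    have "D - C \<noteq> {}"
    proof
      assume e: "D - C = {}"
      have "card (D - C) = 0" unfolding e by simp
      thus False using h(2) by simp
    qed
    then obtain B where B: "B \<in> D - C" by blast
    have sub: "insert B C \<subseteq> D" using h(1) B by blast
    have vC': "valid X (insert B C)" using valid_subset[OF v sub] .
    have "covers X (RC X (insert B C)) (RC X (insert B C - {B}))" using cover_step[OF fin vC'] by blast
    moreover have "insert B C - {B} = C" using B by auto
    ultimately have ad: "adj X (RC X C) (RC X (insert B C))" unfolding adj_def by simp
    have w: "walk X (Suc m) A (RC X (insert B C))" using walk_snoc[OF h(3) ad RC_WO[OF vC']] .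
    have c: "card (D - insert B C) = n" using card_minus_one[OF fD B h(2)] by simp
    have "walk X (Suc m + n) A (RC X D)" using Suc.IH sub c w by blast
    thus "walk X (m + Suc n) A (RC X D)" by simp
  qed
qed

lemma walk_exists: assumes fin: "finite X" and W: "W \<in> WO X" "W' \<in> WO X"
  shows "walk X (card (symdiff (Up X W) (Up X W'))) W W'"
proof -
  let ?P = "Up X W" and ?Q = "Up X W'"
  let ?I = "?P \<inter> ?Q"
  have vP: "valid X ?P" and vQ: "valid X ?Q" using Up_valid W by auto
  have fP: "finite ?P" "finite ?Q" using finite_Up[OF fin] by auto
  have "walk X 0 W (RC X ?P)" using walk0[OF W(1)] RC_Up[OF W(1)] by simp
  hence "walk X (0 + card (?P - ?I)) W (RC X ?I)"
    using walk_down[OF fin vP, of ?I "card (?P - ?I)" W] by blast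
  hence "walk X (0 + card (?P - ?I) + card (?Q - ?I)) W (RC X ?Q)"
    using walk_up[OF fin vQ, of "card (?Q - ?I)" W] by blast
  hence w: "walk X (card (?P - ?I) + card (?Q - ?I)) W W'" using RC_Up[OF W(2)] by simp
  have "symdiff ?P ?Q = (?P - ?I) \<union> (?Q - ?I)" unfolding symdiff_def by blast
  hence "card (symdiff ?P ?Q) = card (?P - ?I) + card (?Q - ?I)"
    using fP by (simp add: card_Un_disjoint Int_Diff_disjoint Diff_Int_distrib2 disjoint_iff)
  thus ?thesis using w by simp
qed

theorem mainTheorem7:
  fixes X :: "'a set"
  assumes "finite X" and "card X > 1"
  shows "(\<forall>W \<in> WO X. \<forall>W' \<in> WO X. gdist X W W' = enat (card (symdiff (J X W) (J X W'))))
     \<and> well_graded (J X ` WO X)"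
proof
  show "\<forall>W \<in> WO X. \<forall>W' \<in> WO X. gdist X W W' = enat (card (symdiff (J X W) (J X W')))"
  proof (intro ballI)
    fix W W' assume W: "W \<in> WO X" "W' \<in> WO X"
    let ?d = "card (symdiff (Up X W) (Up X W'))"
    have w: "walk X ?d W W'" using walk_exists[OF assms(1) W] .
    have "gdist X W W' = enat ?d"
      unfolding gdist_def
    proof (rule antisym)
      show "(INF k \<in> {k. walk X k W W'}. enat k) \<le> enat ?d" using w by (auto intro: INF_lower)
      show "enat ?d \<le> (INF k \<in> {k. walk X k W W'}. enat k)"
        using walk_bound[OF assms(1)] by (auto intro!: INF_greatest)
    qed
    thus "gdist X W W' = enat (card (symdiff (J X W) (J X W')))" using card_J[OF W] by simp
  qed
next
  show "well_graded (J X ` WO X)"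
    unfolding well_graded_def
  proof (intro ballI)
    fix A B assume "A \<in> J X ` WO X" "B \<in> J X ` WO X"
    then obtain W W' where W: "W \<in> WO X" "W' \<in> WO X" and AB: "A = J X W" "B = J X W'" by blast
    have dd: "card (symdiff A B) = card (symdiff (Up X W) (Up X W'))" using card_J[OF W] AB by simp
    obtain ws where ws: "length ws = Suc (card (symdiff A B))" "hd ws = W" "last ws = W'"
      "set ws \<subseteq> WO X" "\<forall>i < card (symdiff A B). adj X (ws ! i) (ws ! Suc i)"
      using walk_exists[OF assms(1) W] dd unfolding walk_def by auto
    have ne: "ws \<noteq> []" using ws(1) by auto
    show "\<exists>as. length as = Suc (card (symdiff A B)) \<and> hd as = A \<and> last as = B \<and> set as \<subseteq> J X ` WO X \<and>
       (\<forall>i < card (symdiff A B). card (symdiff (as ! i) (as ! Suc i)) = 1)"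
    proof (rule exI[of _ "map (J X) ws"], intro conjI)
      show "length (map (J X) ws) = Suc (card (symdiff A B))" using ws by simp
      show "hd (map (J X) ws) = A" using ws ne AB by (simp add: hd_map)
      show "last (map (J X) ws) = B" using ws ne AB by (simp add: last_map)
      show "set (map (J X) ws) \<subseteq> J X ` WO X" using ws by auto
      show "\<forall>i < card (symdiff A B). card (symdiff (map (J X) ws ! i) (map (J X) ws ! Suc i)) = 1"
      proof (intro allI impI)
        fix i assume i: "i < card (symdiff A B)"
        have m: "ws ! i \<in> WO X" "ws ! Suc i \<in> WO X" using ws(1,4) i by auto
        have "card (symdiff (J X (ws ! i)) (J X (ws ! Suc i))) = 1"
          using card_J[OF m] adj_card[OF assms(1)] ws(5) i by simp
        thus "card (symdiff (map (J X) ws ! i) (map (J X) ws ! Suc i)) = 1" using ws(1) i by simp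
      qed
    qed
  qed
qed

end
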